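(* For every bin capacity $S>0$, every finite multiset $D$ of items with sizes in $(0,S]$ and every integer $k\ge1$, $OPT(D_k)\le 2V(D_k)/S+k$.
   Context: $D_k$ is the collection of $k$ copies of each item of $D$, and $V(D_k)$ is the total size of all items in $D_k$ (i.e. $k$ times the total size of $D$). A $k$-times bin packing of $D$ assigns all copies in $D_k$ to bins so that each bin has total size at most $S$ and no bin contains two copies of the same item; $OPT(D_k)$ is the minimum number of bins. *)

theory Defs
  imports Complex_Main "HOL-Library.Multiset"
begin

text \<open>Items are given as a list xs (item i has size xs ! i); copy (i,j), j < k, is the
 j-th copy of item i. A packing f assigns copy (i,j) to bin f i j < m.\<close>

definition k_packing :: "real \<Rightarrow> real list \<Rightarrow> nat \<Rightarrow> nat \<Rightarrow> (nat \<Rightarrow> nat \<Rightarrow> nat) \<Rightarrow> bool" where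
  "k_packing S xs k m f \<longleftrightarrow>
     (\<forall>i<length xs. \<forall>j<k. f i j < m) \<and>
     (\<forall>i<length xs. inj_on (f i) {..<k}) \<and>
     (\<forall>b<m. (\<Sum>(i,j)\<in>{(i,j). i < length xs \<and> j < k \<and> f i j = b}. xs ! i) \<le> S)"

definition opt_k_list :: "real \<Rightarrow> real list \<Rightarrow> nat \<Rightarrow> nat" where
  "opt_k_list S xs k = (LEAST m. \<exists>f. k_packing S xs k m f)"

text \<open>OPT(D_k) for a multiset D of item sizes (independent of the enumeration chosen).\<close>
definition opt_k :: "real \<Rightarrow> real multiset \<Rightarrow> nat \<Rightarrow> nat" where
  "opt_k S D k = opt_k_list S (SOME xs. mset xs = D) k"

definition vol_k :: "real multiset \<Rightarrow> nat \<Rightarrow> real" where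
  "vol_k D k = real k * sum_mset D"

end

theory Submission
  imports Defs
begin

definition load :: "real list \<Rightarrow> (nat \<Rightarrow> nat) \<Rightarrow> nat \<Rightarrow> real" where
  "load xs g b = (\<Sum>i\<in>{i. i < length xs \<and> g i = b}. xs ! i)"

lemma load_snoc:
  "load (xs @ [y]) (g(length xs := c)) b = load xs g b + (if b = c then y else 0)"
proof -
  let ?n = "length xs"
  have set: "{i. i < length (xs@[y]) \<and> (g(?n := c)) i = b} =
      {i. i < ?n \<and> g i = b} \<union> (if b = c then {?n} else {})"
    by (auto simp: less_Suc_eq)
  have s1: "(\<Sum>i\<in>{i. i < ?n \<and> g i = b}. (xs@[y]) ! i) = load xs g b"
    unfolding load_def by (rule sum.cong) (auto simp: nth_append)
  show ?thesis
    unfolding load_def[of "xs@[y]"] set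
    using s1 by (auto simp: sum.union_disjoint)
qed

lemma load_nonneg:
  assumes "\<forall>x\<in>set xs. 0 < x" shows "load xs g b \<ge> 0"
  unfolding load_def using assms by (intro sum_nonneg) (auto simp: less_imp_le)

lemma nf:
  assumes "\<forall>x\<in>set xs. 0 < x \<and> x \<le> S"
  shows "\<exists>g m. (\<forall>i<length xs. g i < m) \<and> (\<forall>b<m. load xs g b \<le> S) \<and>
     (xs \<noteq> [] \<longrightarrow> m \<ge> 1 \<and> 2 * sum_list xs \<ge> real (m-1) * S + load xs g (m-1)) \<and>
     (xs = [] \<longrightarrow> m = 0)"
  using assms
proof (induction xs rule: rev_induct)
  case Nil
  show ?case by (rule exI[of _ "\<lambda>_. 0"], rule exI[of _ 0]) auto
next
  case (snoc y xs)
  have y: "0 < y" "y \<le> S" using snoc.prems by auto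
  from snoc.IH snoc.prems obtain g m where
    g1: "\<forall>i<length xs. g i < m" and g2: "\<forall>b<m. load xs g b \<le> S" and
    g3: "xs \<noteq> [] \<longrightarrow> m \<ge> 1 \<and> 2 * sum_list xs \<ge> real (m-1) * S + load xs g (m-1)" and
    g4: "xs = [] \<longrightarrow> m = 0" by auto
  have ln: "load xs g b \<ge> 0" for b using snoc.prems load_nonneg[of xs g b] by auto
  show ?case
  proof (cases "xs = []")
    case True
    hence m0: "m = 0" using g4 by auto
    have L: "load (xs @ [y]) (g(length xs := 0)) b = (if b = 0 then y else 0)" for b
      using load_snoc[of xs y g 0 b] True by (simp add: load_def)
    show ?thesis
      apply (rule exI[of _ "g(length xs := 0)"], rule exI[of _ 1])
      using True L[of 0] y by (simp add: fun_upd_def)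
  next
    case False
    hence m1: "m \<ge> 1" and inv: "2 * sum_list xs \<ge> real (m-1) * S + load xs g (m-1)"
      using g3 by auto
    show ?thesis
    proof (cases "load xs g (m-1) + y \<le> S")
      case True
      define g' where "g' = g(length xs := m-1)"
      have L: "load (xs @ [y]) g' b = load xs g b + (if b = m-1 then y else 0)" for b
        unfolding g'_def by (rule load_snoc)
      have G: "\<forall>i<length (xs@[y]). g' i < m" using g1 m1 by (auto simp: g'_def less_Suc_eq)
      have B: "\<forall>b<m. load (xs@[y]) g' b \<le> S"
      proof (intro allI impI)
        fix b assume "b < m"
        show "load (xs@[y]) g' b \<le> S" using L[of b] g2 \<open>b < m\<close> True by (cases "b = m-1") auto
      qed
      have I: "2 * sum_list (xs@[y]) \<ge> real (m-1) * S + load (xs@[y]) g' (m-1)"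
        using L[of "m-1"] inv y by simp
      show ?thesis
        apply (rule exI[of _ g'], rule exI[of _ m])
        using G B I m1 by auto
    next
      case False
      define g' where "g' = g(length xs := m)"
      have L: "load (xs @ [y]) g' b = load xs g b + (if b = m then y else 0)" for b
        unfolding g'_def by (rule load_snoc)
      have G: "\<forall>i<length (xs@[y]). g' i < m+1" using g1 m1 by (auto simp: g'_def less_Suc_eq)
      have "{i. i < length xs \<and> g i = m} = {}" using g1 by auto
      hence z: "load xs g m = 0" unfolding load_def by (metis sum.empty)
      have B: "\<forall>b<m+1. load (xs@[y]) g' b \<le> S"
      proof (intro allI impI)
        fix b assume "b < m+1"
        show "load (xs@[y]) g' b \<le> S" using L[of b] z g2 \<open>b < m+1\<close> y
          by (cases "b = m") auto
      qed
      have "real (m+1-1) * S = real (m-1) * S + S" using m1 by (simp add: of_nat_diff algebra_simps)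
      hence I: "2 * sum_list (xs@[y]) \<ge> real (m+1-1) * S + load (xs@[y]) g' (m+1-1)"
        using inv False L[of m] z by simp
      show ?thesis
        apply (rule exI[of _ g'], rule exI[of _ "m+1"])
        using G B I m1 by auto
    qed
  qed
qed

theorem lemma10:
  fixes S :: real and D :: "real multiset" and k :: nat
  assumes "S > 0"
    and "\<forall>x\<in>#D. 0 < x \<and> x \<le> S"
    and "k \<ge> 1"
  shows "real (opt_k S D k) \<le> 2 * vol_k D k / S + real k"
proof -
  define xs where "xs = (SOME xs. mset xs = D)"
  have mx: "mset xs = D" unfolding xs_def by (rule someI_ex) (rule ex_mset)
  have sx: "\<forall>x\<in>set xs. 0 < x \<and> x \<le> S" using assms(2) mx by auto
  obtain g m where g1: "\<forall>i<length xs. g i < m" and g2: "\<forall>b<m. load xs g b \<le> S" and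
    g3: "xs \<noteq> [] \<longrightarrow> m \<ge> 1 \<and> 2 * sum_list xs \<ge> real (m-1) * S + load xs g (m-1)" and
    g4: "xs = [] \<longrightarrow> m = 0" using nf[OF sx] by blast
  define f where "f i j = g i + j * m" for i j
  have pk: "k_packing S xs k (k*m) f"
    unfolding k_packing_def
  proof (intro conjI allI impI)
    fix i j assume i: "i < length xs" and j: "j < k"
    have "g i < m" using g1 i by auto
    have "(j+1) * m \<le> k * m" using j by (intro mult_right_mono) auto
    thus "f i j < k * m" unfolding f_def using \<open>g i < m\<close> by simp
  next
    fix i assume "i < length xs"
    hence "m > 0" using g1 by fastforce
    show "inj_on (f i) {..<k}" unfolding f_def inj_on_def using \<open>m > 0\<close> by auto
  next
    fix b assume b: "b < k * m"
    hence mp: "m > 0" by (cases "m = 0") auto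
    have set: "{(i,j). i < length xs \<and> j < k \<and> f i j = b} =
       (\<lambda>i. (i, b div m)) ` {i. i < length xs \<and> g i = b mod m}"
    proof (rule set_eqI, rule iffI)
      fix p assume "p \<in> {(i,j). i < length xs \<and> j < k \<and> f i j = b}"
      then obtain i j where p: "p = (i,j)" "i < length xs" "j < k" "g i + j * m = b"
        unfolding f_def by auto
      have "g i < m" using g1 p by auto
      hence "b mod m = g i" "b div m = j" using p(4) mp by auto
      thus "p \<in> (\<lambda>i. (i, b div m)) ` {i. i < length xs \<and> g i = b mod m}" using p by auto
    next
      fix p assume "p \<in> (\<lambda>i. (i, b div m)) ` {i. i < length xs \<and> g i = b mod m}"
      then obtain i where p: "p = (i, b div m)" "i < length xs" "g i = b mod m" by auto
      have "b div m < k" using b mp by (simp add: div_less_iff_less_mult)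
      moreover have "g i + b div m * m = b" using p(3) by simp
      ultimately show "p \<in> {(i,j). i < length xs \<and> j < k \<and> f i j = b}"
        using p unfolding f_def by auto
    qed
    have "(\<Sum>(i,j)\<in>{(i,j). i < length xs \<and> j < k \<and> f i j = b}. xs ! i) = load xs g (b mod m)"
      unfolding set load_def by (subst sum.reindex) (auto simp: inj_on_def)
    also have "\<dots> \<le> S" using g2 mp by auto
    finally show "(\<Sum>(i,j)\<in>{(i,j). i < length xs \<and> j < k \<and> f i j = b}. xs ! i) \<le> S" .
  qed
  have "opt_k S D k \<le> k * m"
    unfolding opt_k_def opt_k_list_def xs_def[symmetric] using pk by (intro Least_le) blast
  moreover have "real (k*m) \<le> 2 * vol_k D k / S + real k"
  proof (cases "xs = []")
    case True
    hence "sum_mset D = 0" using mx by auto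
    thus ?thesis using g4 True by (simp add: vol_k_def)
  next
    case False
    hence "m \<ge> 1" and inv: "2 * sum_list xs \<ge> real (m-1) * S + load xs g (m-1)" using g3 by auto
    have "load xs g (m-1) \<ge> 0" using load_nonneg sx by auto
    hence "real (m-1) * S \<le> 2 * sum_list xs" using inv by linarith
    hence "real (m-1) \<le> 2 * sum_list xs / S" using assms(1) by (simp add: field_simps)
    hence "real m \<le> 2 * sum_list xs / S + 1" using \<open>m \<ge> 1\<close> by (simp add: of_nat_diff)
    hence "real k * real m \<le> real k * (2 * sum_list xs / S + 1)" by (intro mult_left_mono) auto
    moreover have "sum_mset D = sum_list xs" using mx by (metis sum_mset_sum_list)
    ultimately show ?thesis by (simp add: vol_k_def algebra_simps)
  qed
  ultimately show ?thesis by linarith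
qed

end
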